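(* Let $\gamma\in PSL(n+1,\mathbb{C})$ be a projective transformation of $\mathbb{P}^n_{\mathbb{C}}$. Then: (1) $\gamma$ is loxodromic if and only if there are two distinct points $x,y\in \mathrm{Fix}(\gamma)$ such that the action of $\gamma$ restricted to the complex projective line $\langle\langle x,y\rangle\rangle$ is loxodromic. (2) $\gamma$ is parabolic if and only if every lift $\widetilde\gamma\in SL(n+1,\mathbb{C})$ of $\gamma$ is non-diagonalizable and for every couple of distinct points $x,y\in \mathrm{Fix}(\gamma)$ the action of $\gamma$ restricted to the complex projective line $\langle\langle x,y\rangle\rangle$ is elliptic. (3) $\gamma$ is elliptic if and only if every lift $\widetilde\gamma\in SL(n+1,\mathbb{C})$ of $\gamma$ is diagonalizable and for every couple of distinct points $x,y\in \mathrm{Fix}(\gamma)$ the action of $\gamma$ restricted to the complex projective line $\langle\langle x,y\rangle\rangle$ is elliptic.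
   Context: $PSL(n+1,\mathbb{C})$ acts on $\mathbb{P}^n_{\mathbb{C}}=(\mathbb{C}^{n+1}\setminus\{0\})/\mathbb{C}^*$; a lift of $\gamma$ is a matrix $\widetilde\gamma\in SL(n+1,\mathbb{C})$ projecting to $\gamma$. $\mathrm{Fix}(\gamma)$ denotes the set of fixed points of $\gamma$ in $\mathbb{P}^n_{\mathbb{C}}$, and for a set of points $P$, $\langle\langle P\rangle\rangle$ is the smallest projective subspace containing $P$ (so for distinct $x,y$ it is the projective line through them). The classification used: $\gamma$ is elliptic if every lift $\widetilde\gamma$ is diagonalizable with all eigenvalues of modulus one; $\gamma$ is loxodromic if every lift $\widetilde\gamma$ has an eigenvalue of modulus different from one; $\gamma$ is parabolic if every lift $\widetilde\gamma$ has only eigenvalues of modulus one and is non-diagonalizable. The same classification applies to the restriction of $\gamma$ to an invariant projective line (an element of $PSL(2,\mathbb{C})$). *)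

theory Defs
  imports "HOL-Analysis.Analysis"
begin

text \<open>A projective transformation of P^n is represented by a matrix
  A in GL(n+1,C) (index type 'n with CARD('n) = n+1); in the theorem A is
  taken in SL(n+1,C). Points of P^n are represented by nonzero vectors.\<close>

definition scale_mat :: "complex \<Rightarrow> complex^'n^'n \<Rightarrow> complex^'n^'n" where
  "scale_mat c A = (\<chi> i j. c * A$i$j)"

definition lifts :: "complex^'n^'n \<Rightarrow> (complex^'n^'n) set" where
  "lifts A = {B. (\<exists>c. B = scale_mat c A) \<and> det B = 1}"

definition diagonalizable_mat :: "complex^'n^'n \<Rightarrow> bool" where
  "diagonalizable_mat B \<longleftrightarrow> (\<exists>(P::complex^'n^'n) (D::complex^'n^'n). invertible P \<and> (\<forall>i j. i \<noteq> j \<longrightarrow> D$i$j = 0)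
      \<and> B = P ** D ** matrix_inv P)"

definition is_eigenvalue :: "complex^'n^'n \<Rightarrow> complex \<Rightarrow> bool" where
  "is_eigenvalue B l \<longleftrightarrow> (\<exists>v. v \<noteq> 0 \<and> B *v v = l *s v)"

definition proj_elliptic :: "complex^'n^'n \<Rightarrow> bool" where
  "proj_elliptic A \<longleftrightarrow> (\<forall>B\<in>lifts A. diagonalizable_mat B \<and> (\<forall>l. is_eigenvalue B l \<longrightarrow> norm l = 1))"

definition proj_loxodromic :: "complex^'n^'n \<Rightarrow> bool" where
  "proj_loxodromic A \<longleftrightarrow> (\<forall>B\<in>lifts A. \<exists>l. is_eigenvalue B l \<and> norm l \<noteq> 1)"

definition proj_parabolic :: "complex^'n^'n \<Rightarrow> bool" where
  "proj_parabolic A \<longleftrightarrow> (\<forall>B\<in>lifts A. \<not> diagonalizable_mat B \<and> (\<forall>l. is_eigenvalue B l \<longrightarrow> norm l = 1))"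

definition proj_fixed :: "complex^'n^'n \<Rightarrow> complex^'n \<Rightarrow> bool" where
  "proj_fixed A v \<longleftrightarrow> v \<noteq> 0 \<and> (\<exists>c. A *v v = c *s v)"

definition proj_distinct :: "complex^'n \<Rightarrow> complex^'n \<Rightarrow> bool" where
  "proj_distinct v w \<longleftrightarrow> v \<noteq> 0 \<and> w \<noteq> 0 \<and> \<not> (\<exists>c. w = c *s v)"

text \<open>M (a 2x2 matrix) is the matrix of the restriction of A to the plane spanned by
  v, w (i.e. to the projective line through [v],[w]) w.r.t. the basis v, w.\<close>
definition restricts_to :: "complex^'n^'n \<Rightarrow> complex^'n \<Rightarrow> complex^'n \<Rightarrow> complex^2^2 \<Rightarrow> bool" where
  "restricts_to A v w M \<longleftrightarrow> (\<forall>a b. A *v (a *s v + b *s w) =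
      (M$1$1 * a + M$1$2 * b) *s v + (M$2$1 * a + M$2$2 * b) *s w)"

definition restr_loxodromic :: "complex^'n^'n \<Rightarrow> complex^'n \<Rightarrow> complex^'n \<Rightarrow> bool" where
  "restr_loxodromic A v w \<longleftrightarrow> (\<exists>M. restricts_to A v w M \<and> proj_loxodromic M)"

definition restr_elliptic :: "complex^'n^'n \<Rightarrow> complex^'n \<Rightarrow> complex^'n \<Rightarrow> bool" where
  "restr_elliptic A v w \<longleftrightarrow> (\<exists>M. restricts_to A v w M \<and> proj_elliptic M)"

end

theory Submission
  imports Defs "HOL-Computational_Algebra.Fundamental_Theorem_Algebra"
begin


definition charpoly :: "complex^'n^'n \<Rightarrow> complex poly" where
  "charpoly A = det (\<chi> i j. (if i = j then [:- A$i$j, 1:] else [:- A$i$j:]))"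

lemma poly_charpoly: "poly (charpoly A) x = det (mat x - A)"
  unfolding charpoly_def det_def poly_sum poly_prod
  by (intro sum.cong refl) (auto simp: mat_def of_int_poly poly_prod intro!: prod.cong)

lemma noninj_of_det0:
  fixes M :: "complex^'n^'n"
  assumes "det M = 0" shows "\<exists>v. v \<noteq> 0 \<and> M *v v = 0"
proof -
  have "\<not> invertible M" using assms invertible_det_nz by blast
  hence "\<not> inj ((*v) M)"
    by (metis invertible_left_inverse matrix_left_invertible_injective)
  thus ?thesis using vec.inj_iff_eq_0 by blast
qed

lemma charpoly_monic:
  fixes A :: "complex^'n^'n"
  shows "degree (charpoly A) = CARD('n) \<and> coeff (charpoly A) CARD('n) = 1"
proof -
  define M where "M = (\<chi> i j. (if i = j then [:- A$i$j, 1:] else [:- A$i$j:]))"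
  define E where "E = (\<lambda>p. of_int (sign p) * (\<Prod>i\<in>UNIV. M$i$p i) :: complex poly)"
  define S where "S = {p. p permutes (UNIV::'n set)}"
  have cp: "charpoly A = sum E S" unfolding charpoly_def M_def[symmetric] det_def E_def S_def ..
  have fS: "finite S" unfolding S_def by (simp add: finite_permutations)
  have idS: "id \<in> S" unfolding S_def by (simp add: permutes_id)
  have Eid: "E id = (\<Prod>i\<in>UNIV. [:- A$i$i, 1:])" unfolding E_def M_def by (simp add: sign_id)
  have degid: "degree (E id) = CARD('n)" unfolding Eid
    by (subst degree_prod_sum_eq) auto
  have coid: "coeff (E id) CARD('n) = 1"
    using lead_coeff_prod[of "\<lambda>i. [:- A$i$i, 1:]" UNIV] degid unfolding Eid by simp
  have degM: "degree (M$i$j) \<le> (if i = j then 1 else 0)" for i j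
    unfolding M_def by auto
  have lt: "degree (E p) < CARD('n)" if "p \<in> S" "p \<noteq> id" for p
  proof -
    obtain k where k: "p k \<noteq> k" using \<open>p \<noteq> id\<close> by (auto simp: fun_eq_iff)
    have "degree (E p) \<le> degree (\<Prod>i\<in>UNIV. M$i$p i)"
      unfolding E_def
      using degree_mult_le[of "of_int (sign p) :: complex poly" "\<Prod>i\<in>UNIV. M$i$p i"] by simp
    also have "\<dots> \<le> (\<Sum>i\<in>UNIV. degree (M$i$p i))" using degree_prod_sum_le[of UNIV "\<lambda>i. M$i$p i"] by (simp add: o_def)
    also have "\<dots> \<le> (\<Sum>i\<in>UNIV. (if p i = i then 1 else 0))"
      by (intro sum_mono) (metis degM)
    also have "\<dots> = card {i. p i = i}" by (simp add: sum.If_cases)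
    also have "\<dots> < CARD('n)"
      by (rule psubset_card_mono) (use k in auto)
    finally show ?thesis .
  qed
  have split: "sum E S = E id + sum E (S - {id})" using fS idS by (simp add: sum.remove)
  have c0: "coeff (sum E (S - {id})) CARD('n) = 0"
    unfolding coeff_sum by (intro sum.neutral) (use lt in \<open>auto intro!: coeff_eq_0\<close>)
  have "degree (sum E (S - {id})) \<le> CARD('n)"
    by (rule degree_sum_le) (use fS lt in \<open>auto intro: less_imp_le\<close>)
  hence "degree (charpoly A) \<le> CARD('n)" unfolding cp split using degid
    by (simp add: degree_add_le)
  moreover have "coeff (charpoly A) CARD('n) = 1" unfolding cp split coeff_add c0 coid by simp
  ultimately show ?thesis using le_degree[of "charpoly A" "CARD('n)"] by auto
qed

lemma ifmult: "(if P then (a::complex) else 0) * b = (if P then a * b else 0)" by simp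

lemma mat_mult_vec: "(mat x :: complex^'n^'n) *v v = x *s v"
  by (simp add: vec_eq_iff matrix_vector_mult_def mat_def ifmult sum.delta sum.delta')

lemma scale_mat_eq: "scale_mat c (A::complex^'n^'n) = mat c ** A"
  by (simp add: vec_eq_iff scale_mat_def matrix_matrix_mult_def mat_def ifmult sum.delta sum.delta')

lemma det_scale_mat: "det (scale_mat c (A::complex^'n^'n)) = c ^ CARD('n) * det A"
  unfolding scale_mat_eq det_mul by (simp add: det_diagonal mat_def)

lemma scale_mat_mult_vec: "scale_mat c (A::complex^'n^'n) *v v = c *s (A *v v)"
  unfolding scale_mat_eq by (simp add: matrix_vector_mul_assoc[symmetric] mat_mult_vec)
  
lemma ev_of_det0:
  fixes A :: "complex^'n^'n"
  assumes "det (mat x - A) = 0" shows "is_eigenvalue A x"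
proof -
  obtain v where "v \<noteq> 0" "(mat x - A) *v v = 0" using noninj_of_det0[OF assms] by blast
  thus ?thesis unfolding is_eigenvalue_def matrix_vector_mult_diff_rdistrib mat_mult_vec by auto
qed

lemma ev_modulus_one:
  fixes A :: "complex^'n^'n"
  assumes d: "det A = 1" and l: "is_eigenvalue A l" and all: "\<And>m. is_eigenvalue A m \<Longrightarrow> norm m = norm l"
  shows "norm l = 1"
proof -
  let ?p = "charpoly A"
  let ?n = "CARD('n)"
  obtain root where r: "smult (lead_coeff ?p) (\<Prod>i<degree ?p. [:-root i, 1:]) = ?p"
    using complex_poly_decompose' by blast
  have pe: "?p = (\<Prod>i<?n. [:-root i, 1:])" using r charpoly_monic[of A] by simp
  have "poly ?p (root i) = 0" if "i < ?n" for i
    unfolding pe poly_prod using that by (intro prod_zero) auto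
  hence ev: "is_eigenvalue A (root i)" if "i < ?n" for i
    using that ev_of_det0 poly_charpoly by metis
  have "poly ?p 0 = det (scale_mat (-1) A)"
    unfolding poly_charpoly by (rule arg_cong[where f=det]) (simp add: vec_eq_iff scale_mat_def mat_def)
  also have "\<dots> = (-1) ^ ?n" by (simp add: d det_scale_mat)
  finally have "norm (poly ?p 0) = 1" by (simp add: norm_power)
  moreover have "norm (poly ?p 0) = norm l ^ ?n"
    unfolding pe poly_prod by (simp add: prod_norm[symmetric] all ev)
  ultimately have "norm l ^ ?n = 1" by simp
  thus ?thesis using power_eq_1_iff[of "cmod l" "CARD('n)"] by simp
qed


definition diagm :: "complex \<Rightarrow> complex \<Rightarrow> complex^2^2" where
  "diagm a b = (\<chi> i j. if i = 1 \<and> j = 1 then a else if i = 2 \<and> j = 2 then b else 0)"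

lemma diagm_nth[simp]: "diagm a b $ 1 $ 1 = a" "diagm a b $ 2 $ 2 = b"
  "diagm a b $ 1 $ 2 = 0" "diagm a b $ 2 $ 1 = 0"
  by (simp_all add: diagm_def)

lemma diagm_ev: "is_eigenvalue (diagm a b) x \<longleftrightarrow> x = a \<or> x = b"
proof
  assume "is_eigenvalue (diagm a b) x"
  then obtain v where v: "v \<noteq> 0" "diagm a b *v v = x *s v" unfolding is_eigenvalue_def by blast
  from v(2) have e1: "a * v$1 = x * v$1" and e2: "b * v$2 = x * v$2"
    by (auto simp: vec_eq_iff matrix_vector_mult_def sum_2 forall_2)
  from v(1) have "v$1 \<noteq> 0 \<or> v$2 \<noteq> 0" by (auto simp: vec_eq_iff forall_2)
  thus "x = a \<or> x = b" using e1 e2 by auto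
next
  assume "x = a \<or> x = b"
  thus "is_eigenvalue (diagm a b) x"
  proof
    assume "x = a"
    thus ?thesis unfolding is_eigenvalue_def
      by (intro exI[of _ "axis 1 1"]) (auto simp: vec_eq_iff matrix_vector_mult_def sum_2 forall_2 axis_def)
  next
    assume "x = b"
    thus ?thesis unfolding is_eigenvalue_def
      by (intro exI[of _ "axis 2 1"]) (auto simp: vec_eq_iff matrix_vector_mult_def sum_2 forall_2 axis_def)
  qed
qed

lemma scale_diagm: "scale_mat c (diagm a b) = diagm (c*a) (c*b)"
  by (auto simp: vec_eq_iff scale_mat_def diagm_def forall_2)

lemma det_diagm: "det (diagm a b) = a * b"
  by (simp add: det_2)

lemma diagm_diagonalizable: "diagonalizable_mat (diagm a b)"
  unfolding diagonalizable_mat_def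
proof (intro exI conjI)
  show "invertible (mat 1 :: complex^2^2)" by (simp add: invertible_det_nz)
  show "\<forall>i j. i \<noteq> j \<longrightarrow> diagm a b $ i $ j = 0" by (auto simp: diagm_def)
  have "matrix_inv (mat 1 :: complex^2^2) = mat 1"
    unfolding matrix_inv_def by (rule some_equality) (auto simp: matrix_mul_lid)
  thus "diagm a b = mat 1 ** diagm a b ** matrix_inv (mat 1)" by simp
qed

lemma diagm_sqrt: fixes a b :: complex assumes "a \<noteq> 0" "b \<noteq> 0" obtains c where "c * a * (c * b) = 1"
proof -
  let ?c = "1 / csqrt (a * b)"
  have "csqrt (a*b) \<noteq> 0" using assms by simp
  hence "?c * a * (?c * b) = (a*b) / (csqrt (a*b))^2" by (simp add: power2_eq_square field_simps)
  also have "\<dots> = 1" using assms by simp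
  finally show ?thesis using that by blast
qed

lemma sq1: fixes x :: real assumes "x * x = 1" "x \<ge> 0" shows "x = 1"
proof -
  have "(x - 1) * (x + 1) = 0" using assms(1) by (simp add: algebra_simps)
  moreover have "x + 1 \<noteq> 0" using assms(2) by simp
  ultimately show ?thesis by simp
qed

lemma prod1_eq: fixes x y :: real assumes "x * y = 1" "x \<ge> 0" "y \<ge> 0"
  shows "x = 1 \<longleftrightarrow> y = 1" "x = y \<longleftrightarrow> x = 1"
  using assms sq1[of x] by auto

lemma diagm_lox: assumes "a \<noteq> 0" "b \<noteq> 0"
  shows "proj_loxodromic (diagm a b) \<longleftrightarrow> norm a \<noteq> norm b"
proof
  assume L: "proj_loxodromic (diagm a b)"
  obtain c where c: "c * a * (c * b) = 1" using diagm_sqrt assms by blast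
  have "scale_mat c (diagm a b) \<in> lifts (diagm a b)"
    unfolding lifts_def using c by (auto simp: scale_diagm det_diagm)
  with L obtain x where "is_eigenvalue (scale_mat c (diagm a b)) x" "norm x \<noteq> 1"
    unfolding proj_loxodromic_def by blast
  hence x: "is_eigenvalue (diagm (c*a) (c*b)) x" "norm x \<noteq> 1" by (simp_all add: scale_diagm)
  hence ne: "norm (c*a) \<noteq> 1 \<or> norm (c*b) \<noteq> 1" using diagm_ev[of "c*a" "c*b" x] by blast
  have pr: "norm (c*a) * norm (c*b) = 1" using c norm_mult[of "c*a" "c*b"] by simp
  have "c \<noteq> 0" using c by auto
  show "norm a \<noteq> norm b"
  proof
    assume "norm a = norm b"
    hence "norm (c*a) = norm (c*b)" by (simp add: norm_mult)
    thus False using ne prod1_eq[OF pr] by simp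
  qed
next
  assume N: "norm a \<noteq> norm b"
  show "proj_loxodromic (diagm a b)" unfolding proj_loxodromic_def
  proof
    fix B assume BL: "B \<in> lifts (diagm a b)"
    then obtain c where B: "B = diagm (c*a) (c*b)" and d: "det B = 1" unfolding lifts_def scale_diagm by blast
    have "c \<noteq> 0" using d B by (auto simp: det_diagm)
    hence "norm (c*a) \<noteq> norm (c*b)" using N by (simp add: norm_mult)
    hence "norm (c*a) \<noteq> 1 \<or> norm (c*b) \<noteq> 1" by linarith
    moreover have "is_eigenvalue B (c*a)" "is_eigenvalue B (c*b)" unfolding B diagm_ev by simp_all
    ultimately show "\<exists>l. is_eigenvalue B l \<and> norm l \<noteq> 1" by blast
  qed
qed

lemma diagm_ell: assumes "a \<noteq> 0" "b \<noteq> 0"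
  shows "proj_elliptic (diagm a b) \<longleftrightarrow> norm a = norm b"
proof
  assume L: "proj_elliptic (diagm a b)"
  obtain c where c: "c * a * (c * b) = 1" using diagm_sqrt assms by blast
  have "scale_mat c (diagm a b) \<in> lifts (diagm a b)"
    unfolding lifts_def using c by (auto simp: scale_diagm det_diagm)
  with L have "\<forall>l. is_eigenvalue (diagm (c*a) (c*b)) l \<longrightarrow> norm l = 1"
    unfolding proj_elliptic_def scale_diagm by blast
  hence "norm (c*a) = 1" "norm (c*b) = 1" by (simp_all add: diagm_ev)
  hence "norm c * norm a = norm c * norm b" by (simp add: norm_mult)
  moreover have "c \<noteq> 0" using c by auto
  ultimately show "norm a = norm b" by simp
next
  assume N: "norm a = norm b"
  show "proj_elliptic (diagm a b)" unfolding proj_elliptic_def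
  proof
    fix B assume "B \<in> lifts (diagm a b)"
    then obtain c where B: "B = diagm (c*a) (c*b)" and d: "det B = 1"
      unfolding lifts_def scale_diagm by blast
    have "c*a*(c*b) = 1" using d B det_diagm by simp
    hence "norm (c*a) * norm (c*b) = 1" using norm_mult[of "c*a" "c*b"] by simp
    moreover have "norm (c*a) = norm (c*b)" using N by (simp add: norm_mult)
    ultimately have "norm (c*a) = 1" "norm (c*b) = 1"
      using prod1_eq[of "norm (c*a)" "norm (c*b)"] by simp_all
    hence "\<forall>l. is_eigenvalue B l \<longrightarrow> norm l = 1" unfolding B diagm_ev by auto
    thus "diagonalizable_mat B \<and> (\<forall>l. is_eigenvalue B l \<longrightarrow> norm l = 1)"
      unfolding B using diagm_diagonalizable by blast
  qed
qed



lemma lifts_self: "det A = 1 \<Longrightarrow> (A::complex^'n^'n) \<in> lifts A"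
  unfolding lifts_def by (intro CollectI conjI exI[of _ 1]) (auto simp: scale_mat_def vec_eq_iff)

lemma lifts_norm:
  fixes A :: "complex^'n^'n"
  assumes "det A = 1" "B \<in> lifts A" shows "\<exists>c. B = scale_mat c A \<and> norm c = 1"
proof -
  obtain c where B: "B = scale_mat c A" and d: "det B = 1" using assms(2) unfolding lifts_def by blast
  have "c ^ CARD('n) = 1" using d B assms(1) by (simp add: det_scale_mat)
  hence "norm c ^ CARD('n) = 1" by (metis norm_one norm_power)
  hence "norm c = 1" using power_eq_1_iff[of "norm c" "CARD('n)"] by simp
  thus ?thesis using B by blast
qed

lemma ev_scale_down:
  fixes A :: "complex^'n^'n"
  assumes "c \<noteq> 0" "is_eigenvalue (scale_mat c A) l" shows "is_eigenvalue A (l / c)"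
proof -
  obtain v where v: "v \<noteq> 0" "c *s (A *v v) = l *s v"
    using assms(2) unfolding is_eigenvalue_def scale_mat_mult_vec by blast
  hence "(1/c) *s (c *s (A *v v)) = (1/c) *s (l *s v)" by simp
  hence "A *v v = (l/c) *s v" using assms(1) by (simp add: vector_smult_assoc)
  thus ?thesis using v(1) unfolding is_eigenvalue_def by blast
qed

lemma ev_nonzero:
  fixes A :: "complex^'n^'n"
  assumes "det A \<noteq> 0" "A *v v = l *s v" "v \<noteq> 0" shows "l \<noteq> 0"
proof
  assume "l = 0"
  hence "A *v v = A *v 0" using assms(2) by simp
  moreover have "inj ((*v) A)" using assms(1) invertible_det_nz inj_matrix_vector_mult by blast
  ultimately show False using assms(3) by (meson injD)
qed

lemma indep:
  assumes "proj_distinct v w" "a *s v + b *s w = (0::complex^'n)" shows "a = 0 \<and> b = 0"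
proof (cases "b = 0")
  case True
  thus ?thesis using assms unfolding proj_distinct_def by simp
next
  case False
  hence "w = (- a / b) *s v" using assms(2)
    by (simp add: vec_eq_iff field_simps) (metis add.commute add_eq_0_iff mult.commute)
  thus ?thesis using assms(1) unfolding proj_distinct_def by blast
qed

lemma restr_diag:
  fixes A :: "complex^'n^'n"
  assumes dis: "proj_distinct v w" and l: "A *v v = l *s v" and m: "A *v w = m *s w"
  shows "restricts_to A v w M \<longleftrightarrow> M = diagm l m"
proof
  assume "M = diagm l m"
  thus "restricts_to A v w M" unfolding restricts_to_def
    by (simp add: matrix_vector_right_distrib vector_scalar_commute l m vector_smult_assoc mult.commute)
next
  assume R: "restricts_to A v w M"
  from R[unfolded restricts_to_def, rule_format, of 1 0]
  have "l *s v = M$1$1 *s v + M$2$1 *s w" using l by simp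
  hence e1: "(M$1$1 - l) *s v + M$2$1 *s w = 0" by (simp add: vec_eq_iff algebra_simps)
  have 1: "M$1$1 = l" "M$2$1 = 0" using indep[OF dis e1] by auto
  from R[unfolded restricts_to_def, rule_format, of 0 1]
  have "m *s w = M$1$2 *s v + M$2$2 *s w" using m by simp
  hence e2: "M$1$2 *s v + (M$2$2 - m) *s w = 0" by (simp add: vec_eq_iff algebra_simps)
  have 2: "M$1$2 = 0" "M$2$2 = m" using indep[OF dis e2] by auto
  show "M = diagm l m" using 1 2 by (simp add: vec_eq_iff forall_2)
qed

lemma restr_lox:
  fixes A :: "complex^'n^'n"
  assumes "proj_distinct v w" "A *v v = l *s v" "A *v w = m *s w" "l \<noteq> 0" "m \<noteq> 0"
  shows "restr_loxodromic A v w \<longleftrightarrow> norm l \<noteq> norm m"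
  unfolding restr_loxodromic_def restr_diag[OF assms(1-3)] using diagm_lox[OF assms(4,5)] by simp

lemma restr_ell:
  fixes A :: "complex^'n^'n"
  assumes "proj_distinct v w" "A *v v = l *s v" "A *v w = m *s w" "l \<noteq> 0" "m \<noteq> 0"
  shows "restr_elliptic A v w \<longleftrightarrow> norm l = norm m"
  unfolding restr_elliptic_def restr_diag[OF assms(1-3)] using diagm_ell[OF assms(4,5)] by simp

lemma distinct_ev:
  fixes A :: "complex^'n^'n"
  assumes "A *v v = l *s v" "A *v w = m *s w" "v \<noteq> 0" "w \<noteq> 0" "l \<noteq> m"
  shows "proj_distinct v w"
proof -
 have "\<not> (\<exists>c. w = c *s v)"
 proof
  assume "\<exists>c. w = c *s v"
  then obtain c where c: "w = c *s v" by blast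
  have "c \<noteq> 0" using c assms(4) by auto
  have "(c * l) *s v = (m * c) *s v" using assms(1,2) c
    by (simp add: vector_scalar_commute vector_smult_assoc)
  hence "((c*l) - (m*c)) *s v = 0" by (simp add: vec_eq_iff algebra_simps)
  hence "c * l = m * c" using assms(3) by (simp add: vec_eq_iff) (metis eq_iff_diff_eq_0)
  thus False using \<open>c \<noteq> 0\<close> assms(5) by simp
 qed
 thus ?thesis using assms unfolding proj_distinct_def by simp
qed



lemma ev_scale_up:
  fixes A :: "complex^'n^'n"
  assumes "is_eigenvalue A m" shows "is_eigenvalue (scale_mat c A) (c*m)"
proof -
  obtain v where v: "v \<noteq> 0" "A *v v = m *s v" using assms unfolding is_eigenvalue_def by blast
  hence "scale_mat c A *v v = (c*m) *s v" by (simp add: scale_mat_mult_vec vector_smult_assoc)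
  thus ?thesis using v(1) unfolding is_eigenvalue_def by blast
qed

theorem mainTheorem5:
  fixes A :: "complex^'n^'n"
  assumes "det A = 1"
  shows "(proj_loxodromic A \<longleftrightarrow>
            (\<exists>v w. proj_fixed A v \<and> proj_fixed A w \<and> proj_distinct v w \<and> restr_loxodromic A v w))
       \<and> (proj_parabolic A \<longleftrightarrow>
            (\<forall>B\<in>lifts A. \<not> diagonalizable_mat B) \<and>
            (\<forall>v w. proj_fixed A v \<and> proj_fixed A w \<and> proj_distinct v w \<longrightarrow> restr_elliptic A v w))
       \<and> (proj_elliptic A \<longleftrightarrow>
            (\<forall>B\<in>lifts A. diagonalizable_mat B) \<and>
            (\<forall>v w. proj_fixed A v \<and> proj_fixed A w \<and> proj_distinct v w \<longrightarrow> restr_elliptic A v w))"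
proof -
  note d = assms
  have AA: "A \<in> lifts A" using lifts_self d by blast
  have dn: "det A \<noteq> 0" using d by simp
  have fixed_ev: "\<exists>l. A *v v = l *s v \<and> l \<noteq> 0 \<and> is_eigenvalue A l" if "proj_fixed A v" for v
    using that ev_nonzero[OF dn] unfolding proj_fixed_def is_eigenvalue_def by blast
  have ev_fixed: "\<exists>v. proj_fixed A v \<and> A *v v = l *s v" if "is_eigenvalue A l" for l
    using that unfolding proj_fixed_def is_eigenvalue_def by blast
  have ev_nz: "l \<noteq> 0" if "is_eigenvalue A l" for l
    using that ev_nonzero[OF dn] unfolding is_eigenvalue_def by blast
  have lift_ev: "\<exists>m. is_eigenvalue A m \<and> norm m = norm l" if LB: "B \<in> lifts A" "is_eigenvalue B l" for B l
  proof -
    obtain c where c: "B = scale_mat c A" "norm c = 1" using lifts_norm[OF d LB(1)] by blast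
    hence "c \<noteq> 0" by auto
    hence "is_eigenvalue A (l / c)" using ev_scale_down LB(2) c by blast
    moreover have "norm (l / c) = norm l" using c(2) by (simp add: norm_divide)
    ultimately show ?thesis by blast
  qed
  have SM: "norm l = norm m"
    if R: "\<forall>v w. proj_fixed A v \<and> proj_fixed A w \<and> proj_distinct v w \<longrightarrow> restr_elliptic A v w"
      and l: "is_eigenvalue A l" and m: "is_eigenvalue A m" for l m
  proof (cases "l = m")
    case False
    obtain v where v: "proj_fixed A v" "A *v v = l *s v" using ev_fixed l by blast
    obtain w where w: "proj_fixed A w" "A *v w = m *s w" using ev_fixed m by blast
    have dis: "proj_distinct v w"
      using distinct_ev[OF v(2) w(2)] v(1) w(1) False unfolding proj_fixed_def by blast
    have "restr_elliptic A v w" using R v(1) w(1) dis by blast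
    thus ?thesis using restr_ell[OF dis v(2) w(2) ev_nz[OF l] ev_nz[OF m]] by simp
  qed simp
  have SM1: "norm l = 1"
    if R: "\<forall>v w. proj_fixed A v \<and> proj_fixed A w \<and> proj_distinct v w \<longrightarrow> restr_elliptic A v w"
      and l: "is_eigenvalue A l" for l
  proof (rule ev_modulus_one[OF d l])
    fix m assume mm: "is_eigenvalue A m" show "norm m = norm l" using SM[OF R mm l] by simp
  qed
  have RE: "restr_elliptic A v w"
    if all1: "\<forall>l. is_eigenvalue A l \<longrightarrow> norm l = 1" and FV: "proj_fixed A v" "proj_fixed A w" "proj_distinct v w" for v w
  proof -
    obtain l where l: "A *v v = l *s v" "l \<noteq> 0" "is_eigenvalue A l" using fixed_ev FV(1) by blast
    obtain m where m: "A *v w = m *s w" "m \<noteq> 0" "is_eigenvalue A m" using fixed_ev FV(2) by blast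
    show ?thesis using restr_ell[OF FV(3) l(1) m(1) l(2) m(2)] all1 l(3) m(3) by simp
  qed
  have P1: "proj_loxodromic A \<longleftrightarrow>
            (\<exists>v w. proj_fixed A v \<and> proj_fixed A w \<and> proj_distinct v w \<and> restr_loxodromic A v w)"
  proof
    assume "proj_loxodromic A"
    then obtain l where l: "is_eigenvalue A l" "norm l \<noteq> 1" using AA unfolding proj_loxodromic_def by blast
    then obtain m where m: "is_eigenvalue A m" "norm m \<noteq> norm l"
      using ev_modulus_one[OF d l(1)] by blast
    hence "l \<noteq> m" by auto
    obtain v where v: "proj_fixed A v" "A *v v = l *s v" using ev_fixed l by blast
    obtain w where w: "proj_fixed A w" "A *v w = m *s w" using ev_fixed m by blast
    have dis: "proj_distinct v w"
      using distinct_ev[OF v(2) w(2)] v(1) w(1) \<open>l \<noteq> m\<close> unfolding proj_fixed_def by blast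
    have "restr_loxodromic A v w" using restr_lox[OF dis v(2) w(2) ev_nz[OF l(1)] ev_nz[OF m(1)]] m by simp
    thus "\<exists>v w. proj_fixed A v \<and> proj_fixed A w \<and> proj_distinct v w \<and> restr_loxodromic A v w"
      using v w dis by blast
  next
    assume "\<exists>v w. proj_fixed A v \<and> proj_fixed A w \<and> proj_distinct v w \<and> restr_loxodromic A v w"
    then obtain v w where vw: "proj_fixed A v" "proj_fixed A w" "proj_distinct v w" "restr_loxodromic A v w" by blast
    obtain l where l: "A *v v = l *s v" "l \<noteq> 0" "is_eigenvalue A l" using fixed_ev vw(1) by blast
    obtain m where m: "A *v w = m *s w" "m \<noteq> 0" "is_eigenvalue A m" using fixed_ev vw(2) by blast
    have nlm: "norm l \<noteq> norm m" using restr_lox[OF vw(3) l(1) m(1) l(2) m(2)] vw(4) by simp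
    show "proj_loxodromic A" unfolding proj_loxodromic_def
    proof
      fix B assume "B \<in> lifts A"
      then obtain c where c: "B = scale_mat c A" "norm c = 1" using lifts_norm[OF d] by blast
      have "is_eigenvalue B (c*l)" "is_eigenvalue B (c*m)"
        using ev_scale_up[OF l(3)] ev_scale_up[OF m(3)] c(1) by simp_all
      moreover have "norm (c*l) \<noteq> 1 \<or> norm (c*m) \<noteq> 1" using nlm c(2) by (auto simp: norm_mult)
      ultimately show "\<exists>l. is_eigenvalue B l \<and> norm l \<noteq> 1" by blast
    qed
  qed
  have P2: "proj_parabolic A \<longleftrightarrow>
            (\<forall>B\<in>lifts A. \<not> diagonalizable_mat B) \<and>
            (\<forall>v w. proj_fixed A v \<and> proj_fixed A w \<and> proj_distinct v w \<longrightarrow> restr_elliptic A v w)"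
  proof
    assume P: "proj_parabolic A"
    hence all1: "\<forall>l. is_eigenvalue A l \<longrightarrow> norm l = 1" using AA unfolding proj_parabolic_def by blast
    show "(\<forall>B\<in>lifts A. \<not> diagonalizable_mat B) \<and>
            (\<forall>v w. proj_fixed A v \<and> proj_fixed A w \<and> proj_distinct v w \<longrightarrow> restr_elliptic A v w)"
      using P RE[OF all1] unfolding proj_parabolic_def by blast
  next
    assume H: "(\<forall>B\<in>lifts A. \<not> diagonalizable_mat B) \<and>
            (\<forall>v w. proj_fixed A v \<and> proj_fixed A w \<and> proj_distinct v w \<longrightarrow> restr_elliptic A v w)"
    show "proj_parabolic A" unfolding proj_parabolic_def
    proof (intro ballI conjI allI impI)
      fix B assume "B \<in> lifts A" thus "\<not> diagonalizable_mat B" using H by blast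
    next
      fix B l assume "B \<in> lifts A" "is_eigenvalue B l"
      then obtain m where "is_eigenvalue A m" "norm m = norm l" using lift_ev by blast
      thus "norm l = 1" using SM1[of m] H by simp
    qed
  qed
  have P3: "proj_elliptic A \<longleftrightarrow>
            (\<forall>B\<in>lifts A. diagonalizable_mat B) \<and>
            (\<forall>v w. proj_fixed A v \<and> proj_fixed A w \<and> proj_distinct v w \<longrightarrow> restr_elliptic A v w)"
  proof
    assume P: "proj_elliptic A"
    hence all1: "\<forall>l. is_eigenvalue A l \<longrightarrow> norm l = 1" using AA unfolding proj_elliptic_def by blast
    show "(\<forall>B\<in>lifts A. diagonalizable_mat B) \<and>
            (\<forall>v w. proj_fixed A v \<and> proj_fixed A w \<and> proj_distinct v w \<longrightarrow> restr_elliptic A v w)"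
      using P RE[OF all1] unfolding proj_elliptic_def by blast
  next
    assume H: "(\<forall>B\<in>lifts A. diagonalizable_mat B) \<and>
            (\<forall>v w. proj_fixed A v \<and> proj_fixed A w \<and> proj_distinct v w \<longrightarrow> restr_elliptic A v w)"
    show "proj_elliptic A" unfolding proj_elliptic_def
    proof (intro ballI conjI allI impI)
      fix B assume "B \<in> lifts A" thus "diagonalizable_mat B" using H by blast
    next
      fix B l assume "B \<in> lifts A" "is_eigenvalue B l"
      then obtain m where "is_eigenvalue A m" "norm m = norm l" using lift_ev by blast
      thus "norm l = 1" using SM1[of m] H by simp
    qed
  qed
  show ?thesis using P1 P2 P3 by blast
qed


end
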